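(* Let $\delta$ be a positive integer and let $$p_\delta(x)=\left(\frac{1+\sqrt{1-4x}}{2}\right)^{\delta+1}+\left(\frac{1-\sqrt{1-4x}}{2}\right)^{\delta+1}.$$ Then $p_\delta(x)$ is a polynomial in $x$ with constant term $1$; writing $p_\delta(x)=\sum_{i=0}^{d}c_ix^i$ with $d=\deg p_\delta$, the sequence $\zeta(\cdot,\delta)$ satisfies the linear recurrence $$\sum_{i=0}^{d}c_i\,\zeta(m-2i,\delta)=0,\quad\text{i.e.}\quad \zeta(m,\delta)=-\sum_{i=1}^{d}c_i\,\zeta(m-2i,\delta),$$ for every integer $m\ge 2d+1$. In other words, $p_\delta$ is the (reciprocal-form) characteristic polynomial of the step-$2$ linear recurrence satisfied by $\zeta(m,\delta)$.
   Context: For positive integers $m$ and $\delta$, a $\delta$-deviation set of size $m$ is a finite sequence $(\alpha_1,\dots,\alpha_\ell)$ of positive integers such that (i) $\sum_i\alpha_i=m$; (ii) $\big|\sum_i\alpha_{2i-1}-\sum_i\alpha_{2i}\big|\le 1$; (iii) $\big|\sum_{1\le i\le j}(-1)^{i-1}\alpha_i\big|\le\delta$ for every $j\ge1$; and $\zeta(m,\delta)$ is the number of $\delta$-deviation sets of size $m$. (Example: $p_3(x)=1-4x+2x^2$ corresponds to $\zeta(m,3)=4\zeta(m-2,3)-2\zeta(m-4,3)$.) *)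

theory Defs
  imports Complex_Main "HOL-Computational_Algebra.Polynomial"
begin

definition alt_sum :: "nat list \<Rightarrow> int" where
  "alt_sum xs = (\<Sum>i<length xs. (-1) ^ i * int (xs ! i))"

definition deviation_set :: "nat \<Rightarrow> nat \<Rightarrow> nat list \<Rightarrow> bool" where
  "deviation_set m \<delta> xs \<longleftrightarrow>
     (\<forall>a\<in>set xs. 0 < a) \<and>
     sum_list xs = m \<and>
     \<bar>alt_sum xs\<bar> \<le> 1 \<and>
     (\<forall>j. 1 \<le> j \<and> j \<le> length xs \<longrightarrow> \<bar>alt_sum (take j xs)\<bar> \<le> int \<delta>)"

definition zeta :: "nat \<Rightarrow> nat \<Rightarrow> nat" where
  "zeta m \<delta> = card {xs. deviation_set m \<delta> xs}"

definition p_fun :: "nat \<Rightarrow> complex \<Rightarrow> complex" where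
  "p_fun \<delta> x = ((1 + csqrt (1 - 4 * x)) / 2) ^ (\<delta> + 1)
              + ((1 - csqrt (1 - 4 * x)) / 2) ^ (\<delta> + 1)"

end

theory Submission
  imports Defs
begin


fun okl :: "nat \<Rightarrow> int \<Rightarrow> int \<Rightarrow> nat list \<Rightarrow> bool" where
  "okl \<delta> s d [] = (\<bar>s\<bar> \<le> 1)"
| "okl \<delta> s d (a # ys) = (0 < a \<and> \<bar>s + d * int a\<bar> \<le> int \<delta> \<and> okl \<delta> (s + d * int a) (-d) ys)"

lemma alt_sum_Nil: "alt_sum [] = 0" by (simp add: alt_sum_def)

lemma alt_sum_Cons: "alt_sum (a # xs) = int a - alt_sum xs"
  unfolding alt_sum_def
  by (simp only: length_Cons sum.lessThan_Suc_shift) (simp add: sum_negf)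

lemma all_split_Suc:
  "(\<forall>j. 1 \<le> j \<and> j \<le> Suc l \<longrightarrow> P j) \<longleftrightarrow> P 1 \<and> (\<forall>j. 1 \<le> j \<and> j \<le> l \<longrightarrow> P (Suc j))"
proof
  assume H: "\<forall>j. 1 \<le> j \<and> j \<le> Suc l \<longrightarrow> P j"
  show "P 1 \<and> (\<forall>j. 1 \<le> j \<and> j \<le> l \<longrightarrow> P (Suc j))" using H by auto
next
  assume H: "P 1 \<and> (\<forall>j. 1 \<le> j \<and> j \<le> l \<longrightarrow> P (Suc j))"
  show "\<forall>j. 1 \<le> j \<and> j \<le> Suc l \<longrightarrow> P j"
  proof (intro allI impI)
    fix j assume j: "1 \<le> j \<and> j \<le> Suc l"
    show "P j"
    proof (cases "j = 1")
      case True then show ?thesis using H by simp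
    next
      case False
      then obtain j' where "j = Suc j'" "1 \<le> j'" using j by (cases j) auto
      then show ?thesis using H j by auto
    qed
  qed
qed

lemma okl_iff:
  assumes "d = 1 \<or> d = -1"
  shows "okl \<delta> s d xs \<longleftrightarrow> (\<forall>a\<in>set xs. 0 < a) \<and> \<bar>s + d * alt_sum xs\<bar> \<le> 1 \<and>
     (\<forall>j. 1 \<le> j \<and> j \<le> length xs \<longrightarrow> \<bar>s + d * alt_sum (take j xs)\<bar> \<le> int \<delta>)"
  using assms
proof (induction xs arbitrary: s d)
  case Nil then show ?case by (simp add: alt_sum_Nil)
next
  case (Cons a ys)
  have d': "-d = 1 \<or> -d = -1" using Cons.prems by auto
  note IH = Cons.IH[OF d', of "s + d * int a"]
  have e1: "s + d * alt_sum (a # ys) = (s + d * int a) + (-d) * alt_sum ys"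
    by (simp add: alt_sum_Cons algebra_simps)
  have e2: "\<And>j. s + d * alt_sum (take (Suc j) (a # ys)) = (s + d*int a) + (-d) * alt_sum (take j ys)"
    by (simp add: alt_sum_Cons algebra_simps)
  have e3: "s + d * alt_sum (take 1 (a # ys)) = s + d * int a"
    by (simp add: alt_sum_Cons alt_sum_Nil)
  show ?case
    unfolding okl.simps IH length_Cons all_split_Suc e1 e2 e3 by auto
qed

definition Dset :: "nat \<Rightarrow> nat \<Rightarrow> int \<Rightarrow> int \<Rightarrow> nat list set" where
  "Dset \<delta> n s d = {xs. sum_list xs = n \<and> okl \<delta> s d xs}"

lemma okl_pos: "okl \<delta> s d xs \<Longrightarrow> \<forall>a\<in>set xs. 0 < a"
  by (induction xs arbitrary: s d) auto

lemma len_le_sum: "\<forall>a\<in>set xs. 0 < (a::nat) \<Longrightarrow> length xs \<le> sum_list xs"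
  by (induction xs) auto

lemma Dset_finite: "finite (Dset \<delta> n s d)"
proof -
  have "Dset \<delta> n s d \<subseteq> {xs. set xs \<subseteq> {0..n} \<and> length xs \<le> n}"
  proof
    fix xs assume "xs \<in> Dset \<delta> n s d"
    then have h: "sum_list xs = n" "\<forall>a\<in>set xs. 0 < a" using okl_pos by (auto simp: Dset_def)
    then have "set xs \<subseteq> {0..n}" using member_le_sum_list by fastforce
    moreover have "length xs \<le> n" using len_le_sum h by metis
    ultimately show "xs \<in> {xs. set xs \<subseteq> {0..n} \<and> length xs \<le> n}" by simp
  qed
  then show ?thesis using finite_subset finite_lists_length_le[OF finite_atLeastAtMost] by blast
qed

lemma zeta_Dset: "zeta m \<delta> = card (Dset \<delta> m 0 1)"
proof -
  have "{xs. deviation_set m \<delta> xs} = Dset \<delta> m 0 1"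
    unfolding deviation_set_def Dset_def using okl_iff[of 1 \<delta> 0] by auto
  then show ?thesis by (simp add: zeta_def)
qed

lemma Dset_0: "Dset \<delta> 0 t d = (if \<bar>t\<bar> \<le> 1 then {[]} else {})"
proof -
  have "xs \<in> Dset \<delta> 0 t d \<longleftrightarrow> xs = [] \<and> \<bar>t\<bar> \<le> 1" for xs
  proof
    assume "xs \<in> Dset \<delta> 0 t d"
    then have "sum_list xs = 0" "okl \<delta> t d xs" by (auto simp: Dset_def)
    moreover have "\<forall>a\<in>set xs. 0 < a" using okl_pos calculation(2) by blast
    ultimately show "xs = [] \<and> \<bar>t\<bar> \<le> 1"
      by (cases xs) auto
  qed (auto simp: Dset_def)
  then show ?thesis by auto
qed

fun inc :: "nat list \<Rightarrow> nat list" where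
  "inc [] = []" | "inc (a # ys) = Suc a # ys"

lemma Dset_Suc:
  assumes s: "\<bar>s\<bar> \<le> int \<delta>" and d: "d = 1 \<or> d = -1"
  shows "Dset \<delta> (Suc n) s d = (if \<bar>s + d\<bar> \<le> int \<delta> then
     Cons 1 ` Dset \<delta> n (s+d) (-d) \<union> inc ` (Dset \<delta> n (s+d) d - {[]}) else {})"
proof -
  have sub: "xs \<in> Cons 1 ` Dset \<delta> n (s+d) (-d) \<union> inc ` (Dset \<delta> n (s+d) d - {[]}) \<and> \<bar>s + d\<bar> \<le> int \<delta>"
    if xs: "xs \<in> Dset \<delta> (Suc n) s d" for xs
  proof -
    from xs have sl: "sum_list xs = Suc n" and ok: "okl \<delta> s d xs" by (auto simp: Dset_def)
    then obtain a ys where xs_eq: "xs = a # ys" by (cases xs) auto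
    from ok xs_eq have a: "0 < a" and b: "\<bar>s + d * int a\<bar> \<le> int \<delta>" and r: "okl \<delta> (s + d * int a) (-d) ys"
      by auto
    have sd: "\<bar>s + d\<bar> \<le> int \<delta>" using s b a d by (auto simp: abs_le_iff)
    show ?thesis
    proof (cases "a = 1")
      case True
      then have "ys \<in> Dset \<delta> n (s+d) (-d)" using sl r xs_eq by (auto simp: Dset_def)
      then show ?thesis using True xs_eq sd by auto
    next
      case False
      then have a2: "a \<ge> 2" using a by auto
      have "okl \<delta> (s + d) d ((a-1) # ys)"
      proof -
        have e: "s + d + d * int (a - 1) = s + d * int a" using a2 by (simp add: of_nat_diff algebra_simps)
        show ?thesis using a2 b r by (simp only: okl.simps e) simp
      qed
      moreover have "sum_list ((a-1) # ys) = n" using sl xs_eq a2 by simp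
      ultimately have "(a-1) # ys \<in> Dset \<delta> n (s+d) d - {[]}" by (simp add: Dset_def del: okl.simps)
      moreover have "xs = inc ((a-1) # ys)" using xs_eq a2 by simp
      ultimately show ?thesis using sd by blast
    qed
  qed
  have sup1: "Cons 1 ys \<in> Dset \<delta> (Suc n) s d" if "ys \<in> Dset \<delta> n (s+d) (-d)" "\<bar>s + d\<bar> \<le> int \<delta>" for ys
    using that by (auto simp: Dset_def)
  have sup2: "inc xs \<in> Dset \<delta> (Suc n) s d" if xin: "xs \<in> Dset \<delta> n (s+d) d - {[]}" for xs
  proof -
    obtain a ys where xs_eq: "xs = a # ys" using xin by (cases xs) auto
    have h: "sum_list (a # ys) = n" "okl \<delta> (s+d) d (a # ys)" using xin xs_eq by (auto simp: Dset_def)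
    have e: "s + d * int (Suc a) = s + d + d * int a" by (simp add: algebra_simps)
    have "okl \<delta> s d (Suc a # ys)" using h by (simp only: okl.simps e) simp
    then show ?thesis using h xs_eq by (simp add: Dset_def del: okl.simps)
  qed
  show ?thesis
    using sub sup1 sup2 by auto
qed



definition sg :: "int \<Rightarrow> complex" where "sg q = (if even q then 1 else -1)"

definition w0 :: "nat \<Rightarrow> int \<Rightarrow> complex" where
  "w0 \<delta> j = (if j mod (2*int \<delta>+2) \<le> 1 then sg (j div (2*int \<delta>+2))
            else if j mod (2*int \<delta>+2) = 2*int \<delta>+2-1 then sg (j div (2*int \<delta>+2) + 1) else 0)"

definition inE :: "nat \<Rightarrow> (int \<Rightarrow> complex) \<Rightarrow> bool" where
  "inE \<delta> g \<longleftrightarrow> (\<forall>j. g (-j) = g j) \<and> (\<forall>j. g (j + (2*int \<delta>+2)) = - g j)"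

lemma sg_succ: "sg (q+1) = - sg q" by (simp add: sg_def)
lemma sg_neg: "sg (-q) = sg q" by (simp add: sg_def)

lemma w0_inE:
  assumes "0 < \<delta>"
  shows "inE \<delta> (w0 \<delta>)"
proof -
  define M where "M = 2*int \<delta>+2"
  have M4: "M \<ge> 4" using assms M_def by simp
  have w: "w0 \<delta> x = (if x mod M \<le> 1 then sg (x div M) else if x mod M = M - 1 then sg (x div M + 1) else 0)" for x
    unfolding w0_def M_def by simp
  have ap: "w0 \<delta> (j + M) = - w0 \<delta> j" for j
  proof -
    have a: "(j+M) div M = j div M + 1" "(j+M) mod M = j mod M" using M4 by simp_all
    show ?thesis unfolding w[of "j+M"] w[of j] a sg_succ by simp
  qed
  have ev: "w0 \<delta> (-j) = w0 \<delta> j" for j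
  proof -
    define q where "q = j div M"
    define r where "r = j mod M"
    have jr: "j = M*q + r" unfolding q_def r_def by simp
    have r0: "0 \<le> r" and rM: "r < M" unfolding r_def using M4 by simp_all
    have wj: "w0 \<delta> j = (if r \<le> 1 then sg q else if r = M - 1 then sg (q + 1) else 0)"
      unfolding w[of j] q_def r_def by (rule refl)
    show ?thesis
    proof (cases "r = 0")
      case True
      have "-j = M*(-q) + 0" using jr True by simp
      then have dm: "(-j) div M = -q" "(-j) mod M = 0"
        using int_div_pos_eq[of "-j" M "-q" 0] int_mod_pos_eq[of "-j" M "-q" 0] M4 by auto
      have "w0 \<delta> (-j) = sg (-q)" unfolding w[of "-j"] dm by simp
      then show ?thesis using wj True by (simp add: sg_neg)
    next
      case False
      have "-j = M*(-q-1) + (M - r)" using jr by (simp add: algebra_simps)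
      then have dm: "(-j) div M = -q-1" "(-j) mod M = M - r"
        using int_div_pos_eq[of "-j" M "-q-1" "M-r"] int_mod_pos_eq[of "-j" M "-q-1" "M-r"] False r0 rM
        by auto
      have wm: "w0 \<delta> (-j) = (if M - r \<le> 1 then sg (-q-1) else if M - r = M - 1 then sg (-q-1+1) else 0)"
        unfolding w[of "-j"] dm by (rule refl)
      show ?thesis
      proof (cases "r = 1")
        case True
        then have "w0 \<delta> (-j) = sg (-q-1+1)" using wm M4 by simp
        also have "\<dots> = sg q" using sg_neg[of q] by simp
        finally show ?thesis using wj True by simp
      next
        case r1: False
        show ?thesis
        proof (cases "r = M - 1")
          case True
          then have "w0 \<delta> (-j) = sg (-q-1)" using wm by simp
          also have "\<dots> = sg (q+1)"
          proof -
            have e: "-q-1 = -(q+1)" by simp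
            show ?thesis by (simp only: e sg_neg)
          qed
          finally show ?thesis using wj True M4 by simp
        next
          case False
          then have "w0 \<delta> (-j) = 0" using wm r1 \<open>r \<noteq> 0\<close> r0 rM by simp
          then show ?thesis using wj False r1 \<open>r \<noteq> 0\<close> r0 by simp
        qed
      qed
    qed
  qed
  show ?thesis unfolding inE_def using ap ev M_def by simp
qed

lemma w0_strip:
  assumes "0 < \<delta>" "\<bar>t\<bar> \<le> int \<delta>"
  shows "w0 \<delta> t = (if \<bar>t\<bar> \<le> 1 then 1 else 0)"
proof -
  define M where "M = 2*int \<delta>+2"
  have w: "w0 \<delta> x = (if x mod M \<le> 1 then sg (x div M) else if x mod M = M - 1 then sg (x div M + 1) else 0)" for x
    unfolding w0_def M_def by simp
  show ?thesis
  proof (cases "t \<ge> 0")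
    case True
    then have dm: "t div M = 0" "t mod M = t" using assms M_def by simp_all
    have "w0 \<delta> t = (if t \<le> 1 then sg 0 else if t = M - 1 then sg 1 else 0)"
      unfolding w[of t] dm by simp
    then show ?thesis using True assms M_def by (simp add: sg_def)
  next
    case False
    have "t = M*(-1) + (t + M)" by simp
    then have dm: "t div M = -1" "t mod M = t + M"
      using int_div_pos_eq[of t M "-1" "t+M"] int_mod_pos_eq[of t M "-1" "t+M"] False assms M_def
      by auto
    have "w0 \<delta> t = (if t + M \<le> 1 then sg (-1) else if t + M = M - 1 then sg (-1+1) else 0)"
      unfolding w[of t] dm by (rule refl)
    then show ?thesis using False assms M_def by (simp add: sg_def)
  qed
qed



definition T :: "(int \<Rightarrow> complex) \<Rightarrow> int \<Rightarrow> complex" where "T g j = g (j-1) + g (j+1)"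

fun Tp :: "nat \<Rightarrow> (int \<Rightarrow> complex) \<Rightarrow> int \<Rightarrow> complex" where
  "Tp 0 f = f" | "Tp (Suc n) f = T (Tp n f)"

lemma Tp_add: "Tp (a+b) f = Tp a (Tp b f)" by (induction a) auto

lemma inE_T: assumes "inE \<delta> g" shows "inE \<delta> (T g)"
proof -
  from assms have ev: "\<And>j. g (-j) = g j" and ap: "\<And>j. g (j + (2*int \<delta>+2)) = - g j"
    by (auto simp: inE_def)
  have "T g (-j) = T g j" for j
  proof -
    have e1: "-j - 1 = -(j+1)" "-j + 1 = -(j-1)" by simp_all
    have "T g (-j) = g (-(j+1)) + g (-(j-1))" by (simp only: T_def e1)
    also have "\<dots> = T g j" by (simp only: ev T_def add.commute)
    finally show ?thesis .
  qed
  moreover have "T g (j + (2*int \<delta>+2)) = - T g j" for j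
  proof -
    have "T g (j + (2*int \<delta>+2)) = g ((j-1) + (2*int \<delta>+2)) + g ((j+1) + (2*int \<delta>+2))"
      by (simp add: T_def algebra_simps)
    also have "\<dots> = - T g j" by (simp only: ap T_def minus_add_distrib)
    finally show ?thesis .
  qed
  ultimately show ?thesis by (simp add: inE_def)
qed

lemma inE_Tp: "inE \<delta> g \<Longrightarrow> inE \<delta> (Tp n g)" by (induction n) (auto intro: inE_T)

lemma inE_zero: assumes "inE \<delta> g" shows "g (int \<delta> + 1) = 0" "g (-(int \<delta> + 1)) = 0"
proof -
  from assms have ev: "\<And>j. g (-j) = g j" and ap: "\<And>j. g (j + (2*int \<delta>+2)) = - g j"
    by (auto simp: inE_def)
  have e: "-(int \<delta>+1) + (2*int \<delta>+2) = int \<delta> + 1" by simp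
  have "g (int \<delta> + 1) = g (-(int \<delta>+1) + (2*int \<delta>+2))" by (simp only: e)
  also have "\<dots> = - g (-(int \<delta>+1))" by (rule ap)
  also have "\<dots> = - g (int \<delta>+1)" by (simp only: ev)
  finally have "g (int \<delta>+1) = - g (int \<delta>+1)" .
  then have "g (int \<delta>+1) + g (int \<delta>+1) = 0" by (simp only: eq_neg_iff_add_eq_0)
  then have "2 * g (int \<delta>+1) = 0" by (simp only: mult_2)
  then show z: "g (int \<delta> + 1) = 0" by simp
  show "g (-(int \<delta> + 1)) = 0" using z ev[of "int \<delta> + 1"] by simp
qed

lemma nil_in_Dset: "[] \<in> Dset \<delta> n t d \<longleftrightarrow> n = 0 \<and> \<bar>t\<bar> \<le> 1"
  by (auto simp: Dset_def)

lemma card_Suc: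
  assumes s: "\<bar>s\<bar> \<le> int \<delta>" and d: "d = 1 \<or> d = -1" and sd: "\<bar>s + d\<bar> \<le> int \<delta>"
  shows "(of_nat (card (Dset \<delta> (Suc n) s d)) :: complex) =
    of_nat (card (Dset \<delta> n (s+d) (-d))) + of_nat (card (Dset \<delta> n (s+d) d))
      - (if n = 0 \<and> \<bar>s+d\<bar> \<le> 1 then 1 else 0)"
proof -
  let ?X = "Dset \<delta> n (s+d) (-d)" and ?Y = "Dset \<delta> n (s+d) d"
  have eq: "Dset \<delta> (Suc n) s d = Cons 1 ` ?X \<union> inc ` (?Y - {[]})"
    using Dset_Suc[OF s d] sd by simp
  have disj: "Cons 1 ` ?X \<inter> inc ` (?Y - {[]}) = {}"
  proof (rule ccontr)
    assume "Cons 1 ` ?X \<inter> inc ` (?Y - {[]}) \<noteq> {}"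
    then obtain ys xs where "xs \<in> ?Y - {[]}" "1 # ys = inc xs" by blast
    moreover then obtain a zs where "xs = a # zs" by (cases xs) auto
    ultimately show False using okl_pos by (auto simp: Dset_def)
  qed
  have inj: "inj_on inc (?Y - {[]})"
  proof (rule inj_onI)
    fix x y assume "x \<in> ?Y - {[]}" "y \<in> ?Y - {[]}" "inc x = inc y"
    then show "x = y" by (cases x; cases y) auto
  qed
  have c1: "card (Cons 1 ` ?X) = card ?X" by (rule card_image) (simp add: inj_on_def)
  have c2: "card (inc ` (?Y - {[]})) = card (?Y - {[]})" by (rule card_image[OF inj])
  have fin: "finite ?X" "finite ?Y" using Dset_finite by auto
  have cU: "card (Dset \<delta> (Suc n) s d) = card ?X + card (?Y - {[]})"
    unfolding eq using card_Un_disjoint[OF _ _ disj] fin c1 c2 by simp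
  have c3: "(of_nat (card (?Y - {[]})) :: complex) = of_nat (card ?Y) - (if n = 0 \<and> \<bar>s+d\<bar> \<le> 1 then 1 else 0)"
  proof (cases "n = 0 \<and> \<bar>s+d\<bar> \<le> 1")
    case True
    then have "[] \<in> ?Y" by (simp add: nil_in_Dset)
    then have "card ?Y > 0" using fin(2) by (auto simp: card_gt_0_iff)
    then have "card ?Y \<ge> 1" by simp
    then show ?thesis using True \<open>[] \<in> ?Y\<close> by (simp add: card_Diff_singleton_if of_nat_diff)
  next
    case False
    then have "[] \<notin> ?Y" by (simp add: nil_in_Dset)
    then show ?thesis using False by simp
  qed
  show ?thesis using cU c3 by simp
qed

lemma count:
  assumes "0 < \<delta>"
  shows "\<bar>s\<bar> \<le> int \<delta> \<Longrightarrow> d = 1 \<or> d = -1 \<Longrightarrow>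
    (of_nat (card (Dset \<delta> (Suc n) s d)) :: complex) = (if \<bar>s + d\<bar> \<le> int \<delta> then Tp n (w0 \<delta>) (s+d) else 0)"
proof (induction n arbitrary: s d)
  case 0
  show ?case
  proof (cases "\<bar>s + d\<bar> \<le> int \<delta>")
    case True
    show ?thesis using card_Suc[OF 0(1,2) True, of 0] True w0_strip[OF assms True]
      by (simp add: Dset_0)
  next
    case False
    then show ?thesis using Dset_Suc[OF 0(1,2), of 0] by simp
  qed
next
  case (Suc n)
  show ?case
  proof (cases "\<bar>s + d\<bar> \<le> int \<delta>")
    case True
    have d': "-d = 1 \<or> -d = -1" using Suc.prems by auto
    have A: "(of_nat (card (Dset \<delta> (Suc n) (s+d) (-d))) :: complex) = Tp n (w0 \<delta>) s"
      using Suc.IH[OF True d'] Suc.prems by simp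
    have B: "(of_nat (card (Dset \<delta> (Suc n) (s+d) d)) :: complex) = Tp n (w0 \<delta>) (s+d+d)"
    proof (cases "\<bar>s + d + d\<bar> \<le> int \<delta>")
      case True2: True
      then show ?thesis using Suc.IH[OF True Suc.prems(2)] by simp
    next
      case False
      have E: "inE \<delta> (Tp n (w0 \<delta>))" using inE_Tp w0_inE assms by blast
      have "s + d + d = int \<delta> + 1 \<or> s + d + d = -(int \<delta> + 1)" using False True Suc.prems by auto
      then have "Tp n (w0 \<delta>) (s+d+d) = 0" using inE_zero[OF E] by auto
      then show ?thesis using Suc.IH[OF True Suc.prems(2)] False by simp
    qed
    have "Tp (Suc n) (w0 \<delta>) (s+d) = Tp n (w0 \<delta>) s + Tp n (w0 \<delta>) (s+d+d)"
      using Suc.prems(2) by (auto simp: T_def)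
    then show ?thesis using card_Suc[OF Suc.prems True, of "Suc n"] A B True by simp
  next
    case False
    then show ?thesis using Dset_Suc[OF Suc.prems, of "Suc n"] by simp
  qed
qed

lemma zeta_F: assumes "0 < \<delta>" shows "(of_nat (zeta (Suc n) \<delta>) :: complex) = Tp n (w0 \<delta>) 1"
  using count[OF assms, of 0 1 n] assms by (simp add: zeta_Dset)



fun L :: "nat \<Rightarrow> complex poly" where
  "L 0 = [:2:]" | "L (Suc 0) = [:1:]" | "L (Suc (Suc n)) = L (Suc n) - pCons 0 (L n)"

lemma coeff_L_SS:
  "coeff (L (Suc (Suc n))) i = coeff (L (Suc n)) i - (if i = 0 then 0 else coeff (L n) (i - 1))"
  by (cases i) (simp_all add: coeff_pCons)

declare L.simps(3)[simp del]

lemma L_ab: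
  fixes a b x :: complex
  assumes ab: "a + b = 1" and ab2: "a * b = x"
  shows "poly (L n) x = a^n + b^n"
proof (induction n rule: L.induct)
  case 1 then show ?case by simp
next
  case 2 then show ?case using ab by simp
next
  case (3 n)
  have "poly (L (Suc (Suc n))) x = poly (L (Suc n)) x - x * poly (L n) x"
    by (simp add: L.simps)
  also have "\<dots> = (a^Suc n + b^Suc n) - x * (a^n + b^n)"
    by (simp only: "3.IH")
  also have "\<dots> = (a+b)*(a^Suc n + b^Suc n) - a*b*(a^n+b^n)"
    by (simp only: ab ab2 mult_1)
  also have "\<dots> = a^Suc(Suc n) + b^Suc(Suc n)"
    by (simp add: algebra_simps)
  finally show ?case .
qed

lemma poly_L: "poly (L n) x = ((1 + csqrt (1-4*x))/2)^n + ((1 - csqrt (1-4*x))/2)^n"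
proof (rule L_ab)
  show "(1 + csqrt (1-4*x))/2 + (1 - csqrt (1-4*x))/2 = 1"
    by (simp add: field_simps)
  have "(1 + csqrt (1-4*x))/2 * ((1 - csqrt (1-4*x))/2) = (1 - (csqrt (1-4*x))^2)/4"
    by (simp add: field_simps power2_eq_square)
  then show "(1 + csqrt (1-4*x))/2 * ((1 - csqrt (1-4*x))/2) = x" by simp
qed

lemma coeff_L0: "coeff (L (Suc n)) 0 = 1"
  by (induction n) (simp_all add: coeff_L_SS)

lemma L_zero: "n < 2*i \<Longrightarrow> coeff (L n) i = 0"
proof (induction n arbitrary: i rule: L.induct)
  case 1 then show ?case by (cases i) auto
next
  case 2 then show ?case by (cases i) auto
next
  case (3 n)
  then show ?case using "3.IH"(1)[of "i-1"] "3.IH"(2)[of i] by (simp add: coeff_L_SS)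
qed

lemma L_lead: "coeff (L (2*k)) k = 2 * (-1)^k \<and> coeff (L (Suc (2*k))) k = of_nat (Suc (2*k)) * (-1)^k"
proof (induction k)
  case 0 then show ?case by simp
next
  case (Suc k)
  have z: "coeff (L (Suc (2*k))) (Suc k) = 0" by (rule L_zero) simp
  have A: "coeff (L (Suc (Suc (2*k)))) (Suc k) = 2 * (-1)^Suc k"
    using z Suc.IH by (simp add: coeff_L_SS)
  have B: "coeff (L (Suc (Suc (Suc (2*k))))) (Suc k) = of_nat (Suc (Suc (Suc (2*k)))) * (-1)^Suc k"
  proof -
    have "coeff (L (Suc (Suc (Suc (2*k))))) (Suc k) = coeff (L (Suc (Suc (2*k)))) (Suc k) - coeff (L (Suc (2*k))) k"
      by (simp only: coeff_L_SS[of "Suc (2*k)" "Suc k"]) simp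
    also have "\<dots> = 2 * (-1)^Suc k - of_nat (Suc (2*k)) * (-1)^k" using A Suc.IH by simp
    also have "\<dots> = of_nat (Suc (Suc (Suc (2*k)))) * (-1)^Suc k" by (simp add: algebra_simps)
    finally show ?thesis .
  qed
  have e1: "2 * Suc k = Suc (Suc (2*k))" by simp
  show ?case unfolding e1 using A B by simp
qed

lemma L_lead_nz: "coeff (L n) (n div 2) \<noteq> 0"
proof (cases "even n")
  case True
  then obtain k where nk: "n = 2*k" by blast
  have d: "n div 2 = k" using nk by simp
  have "coeff (L n) (n div 2) = 2 * (-1)^k" unfolding d unfolding nk by (rule conjunct1[OF L_lead])
  moreover have "(2::complex) * (-1)^k \<noteq> 0" by simp
  ultimately show ?thesis by metis
next
  case False
  define k where "k = n div 2"
  have nk: "n = Suc (2*k)" unfolding k_def using odd_two_times_div_two_succ[OF False] by simp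
  have d: "n div 2 = k" using nk by simp
  have "coeff (L n) (n div 2) = of_nat (Suc (2*k)) * (-1)^k" unfolding d unfolding nk by (rule conjunct2[OF L_lead])
  moreover have "(of_nat (Suc (2*k)) :: complex) * (-1)^k \<noteq> 0"
    by (simp only: mult_eq_0_iff of_nat_eq_0_iff power_eq_0_iff) simp
  ultimately show ?thesis by metis
qed

lemma degree_L: "degree (L n) = n div 2"
proof (rule antisym)
  show "degree (L n) \<le> n div 2"
    by (rule degree_le) (auto intro: L_zero)
  show "n div 2 \<le> degree (L n)"
    by (rule le_degree) (rule L_lead_nz)
qed

lemma OPS: "(\<Sum>i\<le>n. coeff (L n) i * Tp (n - 2*i) f j) = f (j + int n) + f (j - int n)"
proof (induction n arbitrary: j rule: L.induct)
  case 1 show ?case by simp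
next
  case 2 show ?case by (simp add: T_def)
next
  case (3 n)
  define c1 where "c1 = coeff (L (Suc n))"
  define c0 where "c0 = coeff (L n)"
  define g where "g = (\<lambda>i. if i = 0 then 0 else c0 (i-1))"
  have P1: "(\<Sum>i\<le>Suc (Suc n). c1 i * Tp (Suc (Suc n) - 2*i) f j) =
    (\<Sum>i\<le>Suc n. c1 i * Tp (Suc n - 2*i) f (j-1)) + (\<Sum>i\<le>Suc n. c1 i * Tp (Suc n - 2*i) f (j+1))"
  proof -
    have "(\<Sum>i\<le>Suc (Suc n). c1 i * Tp (Suc (Suc n) - 2*i) f j) = (\<Sum>i\<le>Suc n. c1 i * Tp (Suc (Suc n) - 2*i) f j)"
      using L_zero[of "Suc n" "Suc (Suc n)"] by (simp add: c1_def)
    also have "\<dots> = (\<Sum>i\<le>Suc n. c1 i * Tp (Suc n - 2*i) f (j-1) + c1 i * Tp (Suc n - 2*i) f (j+1))"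
    proof (rule sum.cong[OF refl])
      fix i assume "i \<in> {..Suc n}"
      show "c1 i * Tp (Suc (Suc n) - 2*i) f j = c1 i * Tp (Suc n - 2*i) f (j-1) + c1 i * Tp (Suc n - 2*i) f (j+1)"
      proof (cases "2*i \<le> Suc n")
        case True
        then have "Suc (Suc n) - 2*i = Suc (Suc n - 2*i)" by simp
        then show ?thesis by (simp add: T_def algebra_simps)
      next
        case False then have "c1 i = 0" using L_zero c1_def by simp
        then show ?thesis by simp
      qed
    qed
    also have "\<dots> = (\<Sum>i\<le>Suc n. c1 i * Tp (Suc n - 2*i) f (j-1)) + (\<Sum>i\<le>Suc n. c1 i * Tp (Suc n - 2*i) f (j+1))"
      by (simp add: sum.distrib)
    finally show ?thesis .
  qed
  have P2: "(\<Sum>i\<le>Suc (Suc n). g i * Tp (Suc (Suc n) - 2*i) f j) = (\<Sum>i\<le>n. c0 i * Tp (n - 2*i) f j)"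
  proof -
    have "(\<Sum>i\<le>Suc (Suc n). g i * Tp (Suc (Suc n) - 2*i) f j) = (\<Sum>i\<le>Suc n. c0 i * Tp (n - 2*i) f j)"
      by (subst sum.atMost_Suc_shift) (simp add: g_def)
    also have "\<dots> = (\<Sum>i\<le>n. c0 i * Tp (n - 2*i) f j)" using L_zero[of n "Suc n"] by (simp add: c0_def)
    finally show ?thesis .
  qed
  have S: "(\<Sum>i\<le>Suc (Suc n). coeff (L (Suc (Suc n))) i * Tp (Suc (Suc n) - 2*i) f j) =
     (\<Sum>i\<le>Suc (Suc n). c1 i * Tp (Suc (Suc n) - 2*i) f j) - (\<Sum>i\<le>Suc (Suc n). g i * Tp (Suc (Suc n) - 2*i) f j)"
  proof -
    have "coeff (L (Suc (Suc n))) i = c1 i - g i" for i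
      unfolding coeff_L_SS c1_def g_def c0_def by simp
    then show ?thesis by (simp add: left_diff_distrib sum_subtractf)
  qed
  have IH1: "\<And>j. (\<Sum>i\<le>Suc n. c1 i * Tp (Suc n - 2*i) f j) = f (j + int (Suc n)) + f (j - int (Suc n))"
    using "3.IH"(1) c1_def by simp
  have IH0: "\<And>j. (\<Sum>i\<le>n. c0 i * Tp (n - 2*i) f j) = f (j + int n) + f (j - int n)"
    using "3.IH"(2) c0_def by simp
  have a1: "j - 1 + int (Suc n) = j + int n" by simp
  have a2: "j - 1 - int (Suc n) = j - int (Suc (Suc n))" by simp
  have a3: "j + 1 + int (Suc n) = j + int (Suc (Suc n))" by simp
  have a4: "j + 1 - int (Suc n) = j - int n" by simp
  show ?case unfolding S P1 P2 IH1 IH0 a1 a2 a3 a4 by simp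
qed

theorem theorem2:
  fixes \<delta> :: nat
  assumes "0 < \<delta>"
  shows "\<exists>q :: complex poly.
           (\<forall>x. poly q x = p_fun \<delta> x) \<and>
           coeff q 0 = 1 \<and>
           (\<forall>m::nat. m \<ge> 2 * degree q + 1 \<longrightarrow>
              (\<Sum>i\<le>degree q. coeff q i * of_nat (zeta (m - 2 * i) \<delta>)) = 0)"
proof -
  define N where "N = Suc \<delta>"
  define q where "q = L N"
  define d where "d = N div 2"
  have dq: "degree q = d" unfolding q_def d_def by (rule degree_L)
  have pq: "\<forall>x. poly q x = p_fun \<delta> x" by (simp add: q_def N_def poly_L p_fun_def)
  have c0: "coeff q 0 = 1" by (simp add: q_def N_def coeff_L0)
  have w0E: "inE \<delta> (w0 \<delta>)" using w0_inE assms by blast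
  have NE: "int N = int \<delta> + 1" by (simp add: N_def)
  have ext: "(\<Sum>i\<le>d. coeff (L N) i * Tp (N - 2*i) g j) = g (j + int N) + g (j - int N)" for g j
  proof -
    have "(\<Sum>i\<le>d. coeff (L N) i * Tp (N - 2*i) g j) = (\<Sum>i\<le>N. coeff (L N) i * Tp (N - 2*i) g j)"
    proof (rule sum.mono_neutral_left)
      show "\<forall>i\<in>{..N} - {..d}. coeff (L N) i * Tp (N - 2*i) g j = 0"
        using L_zero[of N] d_def by auto
    qed (auto simp: d_def)
    also have "\<dots> = g (j + int N) + g (j - int N)" by (rule OPS)
    finally show ?thesis .
  qed
  have rec: "\<forall>m::nat. m \<ge> 2 * degree q + 1 \<longrightarrow>
              (\<Sum>i\<le>degree q. coeff q i * of_nat (zeta (m - 2 * i) \<delta>)) = 0"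
  proof (intro allI impI)
    fix m :: nat assume m: "2 * degree q + 1 \<le> m"
    have z: "coeff q i * of_nat (zeta (m - 2*i) \<delta>) = coeff (L N) i * Tp (m - 1 - 2*i) (w0 \<delta>) 1"
      if "i \<in> {..d}" for i
    proof -
      have "m - 2*i = Suc (m - 1 - 2*i)" using m that dq by auto
      then show ?thesis using zeta_F[OF assms, of "m - 1 - 2*i"] q_def by simp
    qed
    have S: "(\<Sum>i\<le>degree q. coeff q i * of_nat (zeta (m - 2*i) \<delta>)) =
             (\<Sum>i\<le>d. coeff (L N) i * Tp (m - 1 - 2*i) (w0 \<delta>) 1)"
      unfolding dq using z by (rule sum.cong[OF refl])
    show "(\<Sum>i\<le>degree q. coeff q i * of_nat (zeta (m - 2*i) \<delta>)) = 0"
    proof (cases "N \<le> m - 1")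
      case True
      define k where "k = m - 1 - N"
      define g where "g = Tp k (w0 \<delta>)"
      have gE: "inE \<delta> g" using g_def inE_Tp w0E by blast
      have "(\<Sum>i\<le>d. coeff (L N) i * Tp (m - 1 - 2*i) (w0 \<delta>) 1) = (\<Sum>i\<le>d. coeff (L N) i * Tp (N - 2*i) g 1)"
      proof (rule sum.cong[OF refl])
        fix i assume "i \<in> {..d}"
        then have "2*i \<le> N" using d_def by auto
        then have "m - 1 - 2*i = (N - 2*i) + k" using True k_def by auto
        then show "coeff (L N) i * Tp (m - 1 - 2*i) (w0 \<delta>) 1 = coeff (L N) i * Tp (N - 2*i) g 1"
          by (simp add: g_def Tp_add)
      qed
      also have "\<dots> = g (1 + int N) + g (1 - int N)" by (rule ext)
      also have "\<dots> = 0"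
      proof -
        have ap: "g ((1 - int N) + (2*int \<delta>+2)) = - g (1 - int N)" using gE unfolding inE_def by blast
        have e: "(1 - int N) + (2*int \<delta>+2) = 1 + int N" using NE by simp
        show ?thesis using ap unfolding e by simp
      qed
      finally show ?thesis using S by simp
    next
      case False
      have Nodd: "N = Suc (2*d)" and mN: "m - 1 = 2*d" using m dq False d_def by auto
      define h where "h = (\<lambda>j. \<Sum>i\<le>d. coeff (L N) i * Tp (2*d - 2*i) (w0 \<delta>) j)"
      have hev: "h (-j) = h j" for j
      proof -
        have "Tp n (w0 \<delta>) (-j) = Tp n (w0 \<delta>) j" for n
          using inE_Tp[OF w0E, of n] by (simp add: inE_def)
        then show ?thesis unfolding h_def by simp
      qed
      have Th: "h (-1) + h 1 = 0"
      proof -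
        have "h (0-1) + h (0+1) = (\<Sum>i\<le>d. coeff (L N) i * Tp (N - 2*i) (w0 \<delta>) 0)"
          unfolding h_def sum.distrib[symmetric]
        proof (rule sum.cong[OF refl])
          fix i assume "i \<in> {..d}"
          then have "N - 2*i = Suc (2*d - 2*i)" using Nodd by auto
          then show "coeff (L N) i * Tp (2*d - 2*i) (w0 \<delta>) (0-1) + coeff (L N) i * Tp (2*d - 2*i) (w0 \<delta>) (0+1)
              = coeff (L N) i * Tp (N - 2*i) (w0 \<delta>) 0"
            by (simp add: T_def algebra_simps)
        qed
        also have "\<dots> = w0 \<delta> (0 + int N) + w0 \<delta> (0 - int N)" by (rule ext)
        also have "\<dots> = 0" using inE_zero[OF w0E] NE by simp
        finally show ?thesis by simp
      qed
      have "h 1 + h 1 = 0" using Th hev[of 1] by simp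
      then have "2 * h 1 = 0" by (simp only: mult_2)
      then have h1: "h 1 = 0" by simp
      have "(\<Sum>i\<le>d. coeff (L N) i * Tp (m - 1 - 2*i) (w0 \<delta>) 1) = h 1"
        unfolding h_def mN by simp
      then show ?thesis using S h1 by simp
    qed
  qed
  show ?thesis using pq c0 rec by blast
qed

end
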